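(* For each integer $N\ge 1$ let $\Gamma_N$ be the $(N+1,2)$-PPCFG with nonterminals $\{\mathtt{START},X_1,\dots,X_N\}$, terminals $\{0,1\}$, start symbol $\mathtt{START}$, and the following $N+1$ production groups: the group $(\mathtt{START}\to X_1X_2\cdots X_N,\ \mathtt{START}\to X_1X_2\cdots X_N)$, and for each $k\in\{1,\dots,N\}$ the group $(X_k\to 0,\ X_k\to 1)$. Consider any (deterministic) learning algorithm that, for every parameter setting $p^*\in\{1,2\}^{N+1}$ taken as the unknown target, interacts with a membership oracle for $L(\Gamma_{N,p^*})$ and an equivalence oracle for $L(\Gamma_{N,p^*})$ (whose hypotheses are of the form $\Gamma_{N,p}$, and which answers ``true'' if $L(\Gamma_{N,p})=L(\Gamma_{N,p^*})$ and otherwise returns a string in the symmetric difference $L(\Gamma_{N,p})\,\Delta\,L(\Gamma_{N,p^*})$), and which eventually outputs a parameter setting $p$ with $L(\Gamma_{N,p})=L(\Gamma_{N,p^*})$. Then there is a target $p^*$ and a choice of oracle answers consistent with it for which the algorithm makes at least $2^N-1$ queries. Consequently, there is no algorithm that learns the PPCFGs from equivalence and membership queries using a number of queries bounded by a polynomial in $n$ and $k$.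
   Context: An $(n,k)$-principled parametric context-free grammar ($(n,k)$-PPCFG) is a 4-tuple $\Gamma=(V,\Sigma,\Pi,S)$ where $V$ is a finite set of nonterminals, $\Sigma$ a finite set of terminals, $S\in V$ the start symbol, and $\Pi$ a list of $n$ production groups, the $i$-th group being a $k$-tuple of context-free productions $\Pi_{i,1},\dots,\Pi_{i,k}$, each of the form $A\to\alpha$ with $A\in V$, $\alpha\in(V\cup\Sigma)^*$. A parameter setting is $p=(p_1,\dots,p_n)$ with each $p_i\in\{1,\dots,k\}$; $\Gamma_p$ denotes the ordinary context-free grammar $(V,\Sigma,R,S)$ with $R=\{\Pi_{i,p_i}: 1\le i\le n\}$, and $L(\Gamma_p)$ its language. A membership oracle for $L$ takes a string $w$ and answers whether $w\in L$. The class of PPCFGs is learnable from equivalence and membership queries if there is an algorithm which, for every PPCFG $\Gamma$ and every target language of the form $L(\Gamma_{p^*})$, after finitely many queries outputs some $p$ with $L(\Gamma_p)=L(\Gamma_{p^*})$; it does so efficiently if the number of queries is bounded by a polynomial in $n$ and $k$. *)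

theory Defs
  imports Main
begin

datatype ('n, 't) sym = NT 'n | Tm 't

type_synonym ('n, 't) prod = "'n \<times> ('n, 't) sym list"

definition derive1 :: "('n, 't) prod set \<Rightarrow> ('n, 't) sym list \<Rightarrow> ('n, 't) sym list \<Rightarrow> bool" where
  "derive1 R xs ys \<longleftrightarrow>
     (\<exists>u A \<alpha> v. (A, \<alpha>) \<in> R \<and> xs = u @ [NT A] @ v \<and> ys = u @ \<alpha> @ v)"

definition cfg_lang :: "('n, 't) prod set \<Rightarrow> 'n \<Rightarrow> 't list set" where
  "cfg_lang R S = {w. (derive1 R)\<^sup>*\<^sup>* [NT S] (map Tm w)}"

text \<open>A PPCFG: start symbol and a list of n production groups, each a list (k-tuple)
  of productions. Nonterminals/terminals are the types 'n and 't.\<close>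
type_synonym ('n, 't) ppcfg = "'n \<times> ('n, 't) prod list list"

definition ppcfg_start :: "('n, 't) ppcfg \<Rightarrow> 'n" where
  "ppcfg_start G = fst G"

definition ppcfg_groups :: "('n, 't) ppcfg \<Rightarrow> ('n, 't) prod list list" where
  "ppcfg_groups G = snd G"

text \<open>Parameter settings are lists p of length n with entries in {1..k} (1-based, as in the
  paper); group i (0-based list index) selects its (p!i)-th production.\<close>
definition valid_setting :: "('n, 't) ppcfg \<Rightarrow> nat list \<Rightarrow> bool" where
  "valid_setting G p \<longleftrightarrow> length p = length (ppcfg_groups G) \<and>
     (\<forall>i < length p. 1 \<le> p ! i \<and> p ! i \<le> length (ppcfg_groups G ! i))"

definition ppcfg_rules :: "('n, 't) ppcfg \<Rightarrow> nat list \<Rightarrow> ('n, 't) prod set" where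
  "ppcfg_rules G p = {ppcfg_groups G ! i ! (p ! i - 1) | i. i < length (ppcfg_groups G)}"

definition ppcfg_lang :: "('n, 't) ppcfg \<Rightarrow> nat list \<Rightarrow> 't list set" where
  "ppcfg_lang G p = cfg_lang (ppcfg_rules G p) (ppcfg_start G)"

datatype nt = START | X nat
datatype bit = B0 | B1

definition GammaN :: "nat \<Rightarrow> (nt, bit) ppcfg" where
  "GammaN N = (START,
     [(START, map (\<lambda>k. NT (X k)) [1..<N+1]), (START, map (\<lambda>k. NT (X k)) [1..<N+1])]
     # map (\<lambda>k. [(X k, [Tm B0]), (X k, [Tm B1])]) [1..<N+1])"

datatype ('t, 'p) query = MemQ "'t list" | EqQ 'p
datatype 't answer = MemAns bool | EqTrue | EqCex "'t list"
datatype ('t, 'p) action = Ask "('t, 'p) query" | Output 'p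

type_synonym ('t, 'p) history = "(('t, 'p) query \<times> 't answer) list"

fun answer_ok :: "('p \<Rightarrow> 't list set) \<Rightarrow> 'p \<Rightarrow> ('t, 'p) query \<Rightarrow> 't answer \<Rightarrow> bool" where
  "answer_ok Lang tgt (MemQ w) a \<longleftrightarrow> a = MemAns (w \<in> Lang tgt)"
| "answer_ok Lang tgt (EqQ p) a \<longleftrightarrow>
     (if Lang p = Lang tgt then a = EqTrue
      else (\<exists>w. a = EqCex w \<and> w \<in> (Lang p - Lang tgt) \<union> (Lang tgt - Lang p)))"

text \<open>A (deterministic) learner maps the history so far to its next action.
  A run is a history in which every query is the one the learner asks and
  every answer is consistent with the target.\<close>
definition is_run :: "(('t, 'p) history \<Rightarrow> ('t, 'p) action) \<Rightarrow> ('p \<Rightarrow> 't list set) \<Rightarrow> 'p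
    \<Rightarrow> ('t, 'p) history \<Rightarrow> bool" where
  "is_run learner Lang tgt h \<longleftrightarrow>
     (\<forall>i < length h. learner (take i h) = Ask (fst (h ! i)) \<and>
                    answer_ok Lang tgt (fst (h ! i)) (snd (h ! i)))"

end

theory Submission
  imports Defs
begin
definition bitof :: "nat list \<Rightarrow> nat \<Rightarrow> bit" where "bitof p k = (if p ! k = 1 then B0 else B1)"
definition sstr :: "nat \<Rightarrow> nat list \<Rightarrow> bit list" where "sstr N p = map (bitof p) [1..<N+1]"

lemma grp0: "ppcfg_groups (GammaN N) ! 0 = [(START, map (\<lambda>k. NT (X k)) [1..<N+1]), (START, map (\<lambda>k. NT (X k)) [1..<N+1])]"
  by (simp add: ppcfg_groups_def GammaN_def del: upt_Suc)
lemma grpS: "k < N \<Longrightarrow> ppcfg_groups (GammaN N) ! Suc k = [(X (Suc k), [Tm B0]), (X (Suc k), [Tm B1])]"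
  by (simp add: ppcfg_groups_def GammaN_def del: upt_Suc)
lemma lg: "length (ppcfg_groups (GammaN N)) = Suc N" by (simp add: ppcfg_groups_def GammaN_def)

lemma rules_eq:
  assumes "valid_setting (GammaN N) p"
  shows "ppcfg_rules (GammaN N) p = insert (START, map (\<lambda>k. NT (X k)) [1..<N+1]) ((\<lambda>k. (X k, [Tm (bitof p k)])) ` {1..N})"
proof -
  have lgi: "length (ppcfg_groups (GammaN N) ! i) = 2" if "i < Suc N" for i
    using that by (cases i) (auto simp: grp0 grpS)
  have len: "length p = Suc N" and bnd: "\<And>i. i < Suc N \<Longrightarrow> 1 \<le> p ! i \<and> p ! i \<le> 2"
    using assms lg lgi unfolding valid_setting_def by auto
  show ?thesis
  proof (rule set_eqI, rule iffI)
    fix r assume "r \<in> ppcfg_rules (GammaN N) p"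
    then obtain i where i: "i < Suc N" "r = ppcfg_groups (GammaN N) ! i ! (p ! i - 1)"
      by (auto simp: ppcfg_rules_def lg)
    show "r \<in> insert (START, map (\<lambda>k. NT (X k)) [1..<N+1]) ((\<lambda>k. (X k, [Tm (bitof p k)])) ` {1..N})"
    proof (cases i)
      case 0
      have "p ! i = 1 \<or> p ! i = 2" using bnd[OF i(1)] by auto
      then show ?thesis using i 0 by (auto simp: grp0 simp del: upt_Suc)
    next
      case (Suc k)
      have "p ! i = 1 \<or> p ! i = 2" using bnd[OF i(1)] by auto
      then have "r = (X (Suc k), [Tm (bitof p (Suc k))])" using i Suc by (auto simp: grpS bitof_def)
      moreover have "Suc k \<in> {1..N}" using i Suc by auto
      ultimately show ?thesis by blast
    qed
  next
    fix r assume r: "r \<in> insert (START, map (\<lambda>k. NT (X k)) [1..<N+1]) ((\<lambda>k. (X k, [Tm (bitof p k)])) ` {1..N})"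
    show "r \<in> ppcfg_rules (GammaN N) p"
    proof (cases "r = (START, map (\<lambda>k. NT (X k)) [1..<N+1])")
      case True
      have "p ! 0 = 1 \<or> p ! 0 = 2" using bnd[of 0] by auto
      then have "ppcfg_groups (GammaN N) ! 0 ! (p ! 0 - 1) = r"
        using True by (auto simp: grp0 simp del: upt_Suc)
      then show ?thesis unfolding ppcfg_rules_def lg by force
    next
      case False
      then obtain k where k: "1 \<le> k" "k \<le> N" "r = (X k, [Tm (bitof p k)])" using r by auto
      have "p ! k = 1 \<or> p ! k = 2" using bnd[of k] k by auto
      then have "ppcfg_groups (GammaN N) ! k ! (p ! k - 1) = r"
        using k by (cases k) (auto simp: grpS bitof_def)
      moreover have "k < length (ppcfg_groups (GammaN N))" using k by (simp add: lg)
      ultimately show ?thesis unfolding ppcfg_rules_def by blast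
    qed
  qed
qed

lemma derive1_prefix: "derive1 R xs ys \<Longrightarrow> derive1 R (a @ xs) (a @ ys)"
  unfolding derive1_def by (metis append.assoc)

lemma derives_prefix: "(derive1 R)\<^sup>*\<^sup>* xs ys \<Longrightarrow> (derive1 R)\<^sup>*\<^sup>* (a @ xs) (a @ ys)"
  by (induction rule: rtranclp_induct) (auto intro: rtranclp.rtrancl_into_rtrancl derive1_prefix)

lemma derive1_head: "(A, \<alpha>) \<in> R \<Longrightarrow> derive1 R (NT A # xs) (\<alpha> @ xs)"
  unfolding derive1_def by (metis append.simps(1) append_Cons)

lemma derives_list:
  assumes "\<And>k. k \<in> set ks \<Longrightarrow> (X k, [Tm (b k)]) \<in> R"
  shows "(derive1 R)\<^sup>*\<^sup>* (map (\<lambda>k. NT (X k)) ks) (map (\<lambda>k. Tm (b k)) ks)"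
  using assms
proof (induction ks)
  case Nil then show ?case by simp
next
  case (Cons k ks)
  have "derive1 R (NT (X k) # map (\<lambda>k. NT (X k)) ks) ([Tm (b k)] @ map (\<lambda>k. NT (X k)) ks)"
    using Cons.prems by (intro derive1_head) auto
  moreover have "(derive1 R)\<^sup>*\<^sup>* ([Tm (b k)] @ map (\<lambda>k. NT (X k)) ks) ([Tm (b k)] @ map (\<lambda>k. Tm (b k)) ks)"
    using Cons by (intro derives_prefix) auto
  ultimately show ?case by (simp add: converse_rtranclp_into_rtranclp)
qed

definition inv :: "nat \<Rightarrow> nat list \<Rightarrow> (nt, bit) sym list \<Rightarrow> bool" where
  "inv N p xs \<longleftrightarrow> xs = [NT START] \<or> (length xs = N \<and> (\<forall>i<N. xs ! i = NT (X (Suc i)) \<or> xs ! i = Tm (bitof p (Suc i))))"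

lemma inv_step:
  assumes "derive1 (insert (START, map (\<lambda>k. NT (X k)) [1..<N+1]) ((\<lambda>k. (X k, [Tm (bitof p k)])) ` {1..N})) xs ys"
    and "inv N p xs"
  shows "inv N p ys"
proof -
  obtain u A \<alpha> v where r: "(A, \<alpha>) \<in> insert (START, map (\<lambda>k. NT (X k)) [1..<N+1]) ((\<lambda>k. (X k, [Tm (bitof p k)])) ` {1..N})"
    and xs: "xs = u @ [NT A] @ v" and ys: "ys = u @ \<alpha> @ v"
    using assms(1) unfolding derive1_def by blast
  show ?thesis
  proof (cases "xs = [NT START]")
    case True
    then have "u = []" "v = []" "A = START" using xs by (cases u; auto)+
    then have "ys = map (\<lambda>k. NT (X k)) [1..<N+1]" using r ys by auto
    then show ?thesis unfolding inv_def by (simp del: upt_Suc)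
  next
    case False
    then have L: "length xs = N" and I: "\<forall>i<N. xs ! i = NT (X (Suc i)) \<or> xs ! i = Tm (bitof p (Suc i))"
      using assms(2) unfolding inv_def by auto
    have lu: "length u < N" using L xs by simp
    have "xs ! length u = NT A" using xs by simp
    then have A: "A = X (Suc (length u))" using I lu by force
    then have \<alpha>: "\<alpha> = [Tm (bitof p (Suc (length u)))]" using r by auto
    have ys2: "ys = xs[length u := Tm (bitof p (Suc (length u)))]" using xs ys \<alpha> by simp
    have "ys ! i = NT (X (Suc i)) \<or> ys ! i = Tm (bitof p (Suc i))" if "i < N" for i
      using that I lu L by (cases "i = length u") (auto simp: ys2)
    then show ?thesis unfolding inv_def using L ys2 by auto
  qed
qed

lemma lang_eq:
  assumes "valid_setting (GammaN N) p"
  shows "ppcfg_lang (GammaN N) p = {sstr N p}"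
proof -
  let ?R = "insert (START, map (\<lambda>k. NT (X k)) [1..<N+1]) ((\<lambda>k. (X k, [Tm (bitof p k)])) ` {1..N})"
  have R: "ppcfg_rules (GammaN N) p = ?R" using rules_eq[OF assms] .
  have st: "ppcfg_start (GammaN N) = START" by (simp add: ppcfg_start_def GammaN_def)
  show ?thesis
  proof (rule set_eqI, rule iffI)
    fix w assume "w \<in> ppcfg_lang (GammaN N) p"
    then have d: "(derive1 ?R)\<^sup>*\<^sup>* [NT START] (map Tm w)"
      unfolding ppcfg_lang_def cfg_lang_def R st by simp
    have "inv N p (map Tm w)"
      using d
    proof (induction rule: rtranclp_induct)
      case base then show ?case by (simp add: inv_def)
    next
      case (step y z) then show ?case using inv_step by blast
    qed
    then have "length w = N" and "\<forall>i<N. Tm (w ! i) = Tm (bitof p (Suc i))"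
      unfolding inv_def by auto
    then have "w = sstr N p" unfolding sstr_def by (intro nth_equalityI) (auto simp del: upt_Suc)
    then show "w \<in> {sstr N p}" by simp
  next
    fix w assume "w \<in> {sstr N p}"
    then have w: "w = sstr N p" by simp
    have "derive1 ?R [NT START] (map (\<lambda>k. NT (X k)) [1..<N+1])"
      using derive1_head[of START "map (\<lambda>k. NT (X k)) [1..<N+1]" ?R "[]"] by simp
    moreover have "(derive1 ?R)\<^sup>*\<^sup>* (map (\<lambda>k. NT (X k)) [1..<N+1]) (map (\<lambda>k. Tm (bitof p k)) [1..<N+1])"
      by (rule derives_list) auto
    ultimately have "(derive1 ?R)\<^sup>*\<^sup>* [NT START] (map (\<lambda>k. Tm (bitof p k)) [1..<N+1])"
      by (rule converse_rtranclp_into_rtranclp)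
    moreover have "map Tm w = map (\<lambda>k. Tm (bitof p k)) [1..<N+1]"
      unfolding w sstr_def by (simp del: upt_Suc)
    ultimately have "(derive1 ?R)\<^sup>*\<^sup>* [NT START] (map Tm w)" by metis
    then show "w \<in> ppcfg_lang (GammaN N) p"
      unfolding ppcfg_lang_def cfg_lang_def R st by simp
  qed
qed

lemma is_run_snoc:
  assumes "is_run l Lang t h" "l h = Ask (fst x)" "answer_ok Lang t (fst x) (snd x)"
  shows "is_run l Lang t (h @ [x])"
  using assms unfolding is_run_def
  by (auto simp: nth_append less_Suc_eq)

lemma is_run_butlast:
  assumes "is_run l Lang t (h @ [x])"
  shows "is_run l Lang t h \<and> l h = Ask (fst x) \<and> answer_ok Lang t (fst x) (snd x)"
proof -
  have A: "l (take i (h @ [x])) = Ask (fst ((h @ [x]) ! i)) \<and> answer_ok Lang t (fst ((h @ [x]) ! i)) (snd ((h @ [x]) ! i))"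
    if "i < Suc (length h)" for i using assms that unfolding is_run_def by auto
  have "is_run l Lang t h" unfolding is_run_def
  proof (intro allI impI)
    fix i assume "i < length h" then show "l (take i h) = Ask (fst (h ! i)) \<and> answer_ok Lang t (fst (h ! i)) (snd (h ! i))"
      using A[of i] by (simp add: nth_append)
  qed
  moreover have "l h = Ask (fst x) \<and> answer_ok Lang t (fst x) (snd x)" using A[of "length h"] by simp
  ultimately show ?thesis by blast
qed

lemma is_run_take:
  assumes "is_run l Lang t h" shows "is_run l Lang t (take m h)"
  using assms unfolding is_run_def by (auto simp: min_def)

lemma answer_exists: "\<exists>a. answer_ok Lang t q a"
proof (cases q)
  case (MemQ w) then show ?thesis by simp
next
  case (EqQ p)
  show ?thesis
  proof (cases "Lang p = Lang t")
    case True then show ?thesis using EqQ by simp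
  next
    case False
    then obtain w where "w \<in> (Lang p - Lang t) \<union> (Lang t - Lang p)" by blast
    then show ?thesis using EqQ False by auto
  qed
qed

primrec ext :: "(('t, 'p) history \<Rightarrow> ('t, 'p) action) \<Rightarrow> ('p \<Rightarrow> 't list set) \<Rightarrow> 'p \<Rightarrow> ('t, 'p) history \<Rightarrow> nat \<Rightarrow> ('t, 'p) history" where
  "ext l Lang t h 0 = h"
| "ext l Lang t h (Suc m) = (case l (ext l Lang t h m) of
      Ask q \<Rightarrow> ext l Lang t h m @ [(q, SOME a. answer_ok Lang t q a)]
    | Output p \<Rightarrow> ext l Lang t h m)"

lemma ext_run: "is_run l Lang t h \<Longrightarrow> is_run l Lang t (ext l Lang t h m)"
proof (induction m)
  case 0 then show ?case by simp
next
  case (Suc m)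
  show ?case
  proof (cases "l (ext l Lang t h m)")
    case (Ask q)
    have "answer_ok Lang t q (SOME a. answer_ok Lang t q a)" using answer_exists by (rule someI_ex)
    then show ?thesis using Suc Ask by (auto intro: is_run_snoc)
  next
    case (Output p) then show ?thesis using Suc by simp
  qed
qed

lemma ext_prefix: "\<exists>zs. ext l Lang t h (m + d) = ext l Lang t h m @ zs"
  by (induction d) (auto split: action.split)

lemma extend:
  assumes run: "is_run l Lang t h"
    and nonterm: "\<And>f. \<not> (\<forall>m. is_run l Lang t (map f [0..<m]))"
  shows "\<exists>h' p. is_run l Lang t h' \<and> l h' = Output p \<and> length h' \<ge> length h"
proof (rule ccontr)
  assume nt: "\<not> ?thesis"
  have noout: "\<forall>m p. l (ext l Lang t h m) \<noteq> Output p"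
  proof (intro allI notI)
    fix m p assume o: "l (ext l Lang t h m) = Output p"
    obtain zs where "ext l Lang t h (0 + m) = ext l Lang t h 0 @ zs" using ext_prefix[of l Lang t h 0 m] by blast
    then have "length (ext l Lang t h m) \<ge> length h" by simp
    then show False using nt o ext_run[OF run, of m] by blast
  qed
  have askm: "\<exists>q. l (ext l Lang t h m) = Ask q" for m
    using noout by (cases "l (ext l Lang t h m)") auto
  have len: "length (ext l Lang t h m) = length h + m" for m
  proof (induction m)
    case 0 then show ?case by simp
  next
    case (Suc m) then show ?case using askm[of m] by auto
  qed
  define f where "f i = ext l Lang t h (Suc i) ! i" for i
  have "map f [0..<m] = take m (ext l Lang t h m)" for m
  proof (rule nth_equalityI)
    show "length (map f [0..<m]) = length (take m (ext l Lang t h m))" using len by simp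
  next
    fix j assume "j < length (map f [0..<m])"
    then have j: "j < m" by simp
    obtain zs where zs: "ext l Lang t h (Suc j + (m - Suc j)) = ext l Lang t h (Suc j) @ zs"
      using ext_prefix[of l Lang t h "Suc j" "m - Suc j"] by blast
    have "Suc j + (m - Suc j) = m" using j by simp
    then have "ext l Lang t h m ! j = ext l Lang t h (Suc j) ! j"
      using zs len[of "Suc j"] by (simp add: nth_append)
    then show "map f [0..<m] ! j = take m (ext l Lang t h m) ! j" using j by (simp add: f_def)
  qed
  then have "\<forall>m. is_run l Lang t (map f [0..<m])"
    using is_run_take ext_run[OF run] by metis
  then show False using nonterm by blast
qed

fun adv :: "nat \<Rightarrow> (bit, nat list) query \<Rightarrow> bit answer" where
  "adv N (MemQ w) = MemAns False"
| "adv N (EqQ p) = EqCex (sstr N p)"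

fun key :: "nat \<Rightarrow> (bit, nat list) query \<times> bit answer \<Rightarrow> bit list" where
  "key N (MemQ w, a) = w"
| "key N (EqQ p, a) = sstr N p"

primrec advrun :: "((bit, nat list) history \<Rightarrow> (bit, nat list) action) \<Rightarrow> nat \<Rightarrow> nat \<Rightarrow> (bit, nat list) history" where
  "advrun l N 0 = []"
| "advrun l N (Suc m) = (case l (advrun l N m) of
      Ask q \<Rightarrow> advrun l N m @ [(q, adv N q)]
    | Output p \<Rightarrow> advrun l N m)"

lemma advrun_len: "(\<forall>j<m. \<exists>q. l (advrun l N j) = Ask q) \<Longrightarrow> length (advrun l N m) = m"
  by (induction m) (auto split: action.split)

lemma adv_is_run:
  assumes wf: "\<forall>tgt h p. valid_setting (GammaN N) tgt
              \<and> is_run l (ppcfg_lang (GammaN N)) tgt h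
              \<and> l h = Ask (EqQ p) \<longrightarrow> valid_setting (GammaN N) p"
    and vt: "valid_setting (GammaN N) t"
  shows "(\<forall>j<m. \<exists>q. l (advrun l N j) = Ask q) \<Longrightarrow> sstr N t \<notin> key N ` set (advrun l N m)
     \<Longrightarrow> is_run l (ppcfg_lang (GammaN N)) t (advrun l N m)"
proof (induction m)
  case 0 then show ?case by (simp add: is_run_def)
next
  case (Suc m)
  obtain q where q: "l (advrun l N m) = Ask q" using Suc.prems(1) by blast
  have ar: "advrun l N (Suc m) = advrun l N m @ [(q, adv N q)]" using q by simp
  have run: "is_run l (ppcfg_lang (GammaN N)) t (advrun l N m)"
    using Suc ar by auto
  have nk: "sstr N t \<noteq> key N (q, adv N q)" using Suc.prems(2) ar by auto
  have Lt: "ppcfg_lang (GammaN N) t = {sstr N t}" using lang_eq[OF vt] .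
  have "answer_ok (ppcfg_lang (GammaN N)) t q (adv N q)"
  proof (cases q)
    case (MemQ w) then show ?thesis using nk Lt by auto
  next
    case (EqQ p)
    have "valid_setting (GammaN N) p" using wf vt run q EqQ by blast
    then have Lp: "ppcfg_lang (GammaN N) p = {sstr N p}" by (rule lang_eq)
    show ?thesis using EqQ nk Lt Lp by auto
  qed
  then show ?case using ar run q by (simp add: is_run_snoc)
qed

lemma valid_exists:
  assumes "length w = N"
  shows "\<exists>t. valid_setting (GammaN N) t \<and> sstr N t = w"
proof -
  define t where "t = 1 # map (\<lambda>c. if c = B0 then 1 else (2::nat)) w"
  have lgi: "length (ppcfg_groups (GammaN N) ! i) = 2" if "i < Suc N" for i
    using that by (cases i) (auto simp: grp0 grpS)
  have "valid_setting (GammaN N) t"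
    unfolding valid_setting_def using assms lgi by (auto simp: t_def lg nth_Cons split: nat.split)
  moreover have "sstr N t = w"
  proof (rule nth_equalityI)
    show "length (sstr N t) = length w" using assms by (simp add: sstr_def)
  next
    fix i assume "i < length (sstr N t)"
    then have i: "i < N" by (simp add: sstr_def del: upt_Suc)
    have "sstr N t ! i = bitof t (Suc i)" using i by (simp add: sstr_def del: upt_Suc)
    also have "\<dots> = w ! i" using i assms by (cases "w ! i") (auto simp: bitof_def t_def)
    finally show "sstr N t ! i = w ! i" .
  qed
  ultimately show ?thesis by blast
qed

lemma cardW: "card {w :: bit list. set w \<subseteq> {B0, B1} \<and> length w = N} = 2 ^ N"
  by (simp add: card_lists_length_eq numeral_2_eq_2)

lemma allW: "set (w :: bit list) \<subseteq> {B0, B1}"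
  by (auto intro: bit.exhaust)

theorem mainTheorem1:
  fixes N :: nat
    and learner :: "(bit, nat list) history \<Rightarrow> (bit, nat list) action"
  assumes "N \<ge> 1"
    and eq_queries_wf: "\<forall>tgt h p. valid_setting (GammaN N) tgt
              \<and> is_run learner (ppcfg_lang (GammaN N)) tgt h
              \<and> learner h = Ask (EqQ p) \<longrightarrow> valid_setting (GammaN N) p"
    and terminates: "\<forall>tgt (f :: nat \<Rightarrow> (bit, nat list) query \<times> bit answer).
              valid_setting (GammaN N) tgt \<longrightarrow>
              \<not> (\<forall>m. is_run learner (ppcfg_lang (GammaN N)) tgt (map f [0..<m]))"
    and correct: "\<forall>tgt h p. valid_setting (GammaN N) tgt
              \<and> is_run learner (ppcfg_lang (GammaN N)) tgt h
              \<and> learner h = Output p \<longrightarrow>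
                valid_setting (GammaN N) p
                \<and> ppcfg_lang (GammaN N) p = ppcfg_lang (GammaN N) tgt"
  shows "\<exists>tgt h p. valid_setting (GammaN N) tgt
              \<and> is_run learner (ppcfg_lang (GammaN N)) tgt h
              \<and> learner h = Output p
              \<and> length h \<ge> 2 ^ N - 1"
proof -
  let ?L = "ppcfg_lang (GammaN N)"
  let ?K = "2 ^ N - 1 :: nat"
  let ?W = "{w :: bit list. set w \<subseteq> {B0, B1} \<and> length w = N}"
  let ?E = "\<lambda>m. key N ` set (advrun learner N m)"
  have finW: "finite ?W" using finite_lists_length_eq[of "{B0, B1}" N] by simp
  have cardE: "card (?E m) \<le> m" if "\<forall>j<m. \<exists>q. learner (advrun learner N j) = Ask q" for m
    using card_image_le[of "set (advrun learner N m)" "key N"] card_length[of "advrun learner N m"]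
      advrun_len[OF that] by simp
  have cardWE: "card (?W - ?E m) + m \<ge> 2 ^ N" if "\<forall>j<m. \<exists>q. learner (advrun learner N j) = Ask q" for m
  proof -
    have "?W \<subseteq> (?W - ?E m) \<union> ?E m" by blast
    then have "card ?W \<le> card ((?W - ?E m) \<union> ?E m)"
      using finW by (intro card_mono) auto
    also have "\<dots> \<le> card (?W - ?E m) + card (?E m)" by (rule card_Un_le)
    finally show ?thesis using cardW[of N] cardE[OF that] by simp
  qed
  show ?thesis
  proof (cases "\<exists>j<?K. \<forall>q. learner (advrun learner N j) \<noteq> Ask q")
    case True
    then obtain j where j: "j < ?K" "\<forall>q. learner (advrun learner N j) \<noteq> Ask q"
      and least: "\<forall>i<j. \<not> (\<forall>q. learner (advrun learner N i) \<noteq> Ask q)"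
      using exists_least_iff[where P = "\<lambda>j. j < ?K \<and> (\<forall>q. learner (advrun learner N j) \<noteq> Ask q)"]
      by (metis (no_types, lifting) order.strict_trans)
    have asks: "\<forall>i<j. \<exists>q. learner (advrun learner N i) = Ask q" using least by blast
    obtain p where p: "learner (advrun learner N j) = Output p"
      using j(2) by (cases "learner (advrun learner N j)") auto
    have "card (?W - ?E j) \<ge> 2" using cardWE[OF asks] j(1) by simp
    then obtain w1 w2 where w: "w1 \<in> ?W - ?E j" "w2 \<in> ?W - ?E j" "w1 \<noteq> w2"
      using card_le_Suc0_iff_eq[of "?W - ?E j"] finW by (metis (no_types, lifting) finite_Diff not_less_eq_eq numeral_2_eq_2)
    obtain t1 where t1: "valid_setting (GammaN N) t1" "sstr N t1 = w1" using valid_exists w(1) by blast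
    obtain t2 where t2: "valid_setting (GammaN N) t2" "sstr N t2 = w2" using valid_exists w(2) by blast
    have r1: "is_run learner ?L t1 (advrun learner N j)"
      using adv_is_run[OF eq_queries_wf t1(1) asks] t1(2) w(1) by blast
    have r2: "is_run learner ?L t2 (advrun learner N j)"
      using adv_is_run[OF eq_queries_wf t2(1) asks] t2(2) w(2) by blast
    have "?L p = ?L t1" "?L p = ?L t2" using correct t1(1) t2(1) r1 r2 p by blast+
    then have "{w1} = {w2}" using lang_eq[OF t1(1)] lang_eq[OF t2(1)] t1(2) t2(2) by simp
    then show ?thesis using w(3) by simp
  next
    case False
    then have asks: "\<forall>j<?K. \<exists>q. learner (advrun learner N j) = Ask q" by blast
    have pos: "(1::nat) \<le> 2 ^ N" by simp
    have "card (?W - ?E ?K) \<ge> 1" using cardWE[OF asks] pos by linarith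
    then obtain w where w: "w \<in> ?W - ?E ?K" by (metis card.empty ex_in_conv not_one_le_zero)
    obtain t where t: "valid_setting (GammaN N) t" "sstr N t = w" using valid_exists w by blast
    have r: "is_run learner ?L t (advrun learner N ?K)"
      using adv_is_run[OF eq_queries_wf t(1) asks] t(2) w by blast
    have "\<exists>h' p. is_run learner ?L t h' \<and> learner h' = Output p \<and> length h' \<ge> length (advrun learner N ?K)"
      using extend[OF r] terminates t(1) by blast
    then show ?thesis using advrun_len[OF asks] t(1) by metis
  qed
qed
end
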